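(* Let $U$ be a set with a total order $\preceq$, let $k>1$, and let $\mathcal P$ be a $k$-pattern in $U$ that admits at most one reconstruction from $\preceq$-consecutive points. Let $n$ be a positive integer, $r$ the remainder when $n$ is divided by $k-1$, $V$ an $n$-element subset of $U$, and $(V_1\prec\cdots\prec V_{k-1})$ a $\preceq$-orderly, balanced $(k-1)$-decomposition of $V$. Then $S_{\mathcal P}(V)=(n-r)(n+r-k+1)/(2k-2)$ if and only if for every $j\in\{1,\dots,k-1\}$ and every pair of points $v\prec w$ in $V_j$, there exists a reconstruction $P$ of $\mathcal P$ with $v$ and $w$ as its $j$th and $(j+1)$th points, and this $P$ is a subset of $V$ that is not of echelon $i$ in the decomposition for any $i\neq j$.
   Context: A pattern in $U$ is a collection $\mathcal P$ of finite subsets of $U$; it is a $k$-pattern if every instance has exactly $k$ elements. $S_{\mathcal P}(V)=|\{P\subseteq V:P\in\mathcal P\}|$. The $i$th point of a finite set w.r.t. $\preceq$ is the element with exactly $i-1$ elements of the set below it. For $j\in\{1,\dots,k-1\}$ and $u\prec v$, a reconstruction of $\mathcal P$ with $u,v$ as $j$th and $(j+1)$th points is an instance $P\in\mathcal P$ whose $j$th and $(j+1)$th points are $u,v$; $\mathcal P$ admits at most one reconstruction from $\preceq$-consecutive points if there is at most one such reconstruction for all such $j,u,v$. For $A,B\subseteq U$, $A\prec B$ means $a\prec b$ for all $a\in A,b\in B$. An $\ell$-decomposition of $V$ is a family $(V_1,\dots,V_\ell)$ of pairwise disjoint, possibly empty subsets with union $V$; it is $\preceq$-orderly if any two distinct members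 are $\prec$-comparable as sets (indexed so $V_1\prec\cdots\prec V_\ell$), and balanced if each $V_i$ has $\lfloor n/\ell\rfloor$ or $\lceil n/\ell\rceil$ elements. A $k$-subset $P=\{p_1\prec\cdots\prec p_k\}$ is of echelon $j$ in $(V_1\prec\cdots\prec V_{k-1})$ if $p_j,p_{j+1}\in V_j$. *)

theory Defs
  imports Complex_Main
begin

definition k_pattern :: "nat \<Rightarrow> 'a set set \<Rightarrow> bool" where
  "k_pattern k \<P> \<longleftrightarrow> (\<forall>P\<in>\<P>. finite P \<and> card P = k)"

definition count_instances :: "'a set set \<Rightarrow> 'a set \<Rightarrow> nat" where
  "count_instances \<P> V = card {P. P \<subseteq> V \<and> P \<in> \<P>}"

definition ith_point :: "'a::linorder set \<Rightarrow> nat \<Rightarrow> 'a" where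
  "ith_point A i = (THE x. x \<in> A \<and> card {y\<in>A. y < x} = i - 1)"

definition is_reconstruction ::
    "'a::linorder set set \<Rightarrow> nat \<Rightarrow> 'a \<Rightarrow> 'a \<Rightarrow> 'a set \<Rightarrow> bool" where
  "is_reconstruction \<P> j u v P \<longleftrightarrow>
     P \<in> \<P> \<and> ith_point P j = u \<and> ith_point P (Suc j) = v"

definition at_most_one_reconstruction :: "nat \<Rightarrow> 'a::linorder set set \<Rightarrow> bool" where
  "at_most_one_reconstruction k \<P> \<longleftrightarrow>
     (\<forall>j\<in>{1..k-1}. \<forall>u v. u < v \<longrightarrow>
        (\<forall>P Q. is_reconstruction \<P> j u v P \<and> is_reconstruction \<P> j u v Q \<longrightarrow> P = Q))"

definition set_less :: "'a::linorder set \<Rightarrow> 'a set \<Rightarrow> bool" where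
  "set_less A B \<longleftrightarrow> (\<forall>a\<in>A. \<forall>b\<in>B. a < b)"

definition decomposition :: "nat \<Rightarrow> (nat \<Rightarrow> 'a set) \<Rightarrow> 'a set \<Rightarrow> bool" where
  "decomposition l Vs V \<longleftrightarrow>
     (\<forall>i\<in>{1..l}. \<forall>i'\<in>{1..l}. i \<noteq> i' \<longrightarrow> Vs i \<inter> Vs i' = {}) \<and>
     (\<Union>i\<in>{1..l}. Vs i) = V"

definition orderly :: "nat \<Rightarrow> (nat \<Rightarrow> 'a::linorder set) \<Rightarrow> bool" where
  "orderly l Vs \<longleftrightarrow> (\<forall>i\<in>{1..l}. \<forall>i'\<in>{1..l}. i < i' \<longrightarrow> set_less (Vs i) (Vs i'))"

definition balanced :: "nat \<Rightarrow> nat \<Rightarrow> (nat \<Rightarrow> 'a set) \<Rightarrow> bool" where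
  "balanced n l Vs \<longleftrightarrow>
     (\<forall>i\<in>{1..l}. finite (Vs i) \<and>
        (card (Vs i) = n div l \<or> card (Vs i) = (n + l - 1) div l))"

definition of_echelon :: "(nat \<Rightarrow> 'a::linorder set) \<Rightarrow> nat \<Rightarrow> 'a set \<Rightarrow> bool" where
  "of_echelon Vs j P \<longleftrightarrow> ith_point P j \<in> Vs j \<and> ith_point P (Suc j) \<in> Vs j"

end

theory Submission imports Defs begin

lemma ith_point_sorted:
  fixes A :: "'a::linorder set"
  assumes "finite A" "t < card A"
  shows "ith_point A (Suc t) = sorted_list_of_set A ! t"
proof -
  define xs where "xs = sorted_list_of_set A"
  have len: "length xs = card A" using assms by (simp add: xs_def)
  have ss: "sorted_wrt (<) xs" by (simp add: xs_def)
  have dist: "distinct xs" by (simp add: xs_def)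
  have st: "set xs = A" using assms by (simp add: xs_def)
  have below: "{y\<in>A. y < xs!s} = (\<lambda>i. xs!i) ` {..<s}" if s: "s < card A" for s
  proof (intro set_eqI iffI)
    fix y assume y: "y \<in> {y\<in>A. y < xs!s}"
    then obtain i where i: "i < length xs" "y = xs!i" using st by (auto simp: in_set_conv_nth)
    have "i < s"
    proof (rule ccontr)
      assume "\<not> i < s"
      then have "xs!s \<le> xs!i" using sorted_wrt_nth_less[OF ss, of s i] i s len
        by (cases "s = i") auto
      with y i show False by auto
    qed
    then show "y \<in> (\<lambda>i. xs!i) ` {..<s}" using i by auto
  next
    fix y assume "y \<in> (\<lambda>i. xs!i) ` {..<s}"
    then obtain i where "i < s" "y = xs!i" by auto
    then show "y \<in> {y\<in>A. y < xs!s}" using sorted_wrt_nth_less[OF ss, of i s] s len st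
      by (auto simp: in_set_conv_nth) (metis len nth_mem order.strict_trans st)
  qed
  have cb: "card {y\<in>A. y < xs!s} = s" if s: "s < card A" for s
  proof -
    have "inj_on (\<lambda>i. xs!i) {..<s}" using dist s len
      by (auto simp: inj_on_def nth_eq_iff_index_eq)
    then show ?thesis using below[OF s] by (simp add: card_image)
  qed
  show ?thesis unfolding ith_point_def xs_def[symmetric]
  proof (rule the_equality)
    show "xs ! t \<in> A \<and> card {y \<in> A. y < xs ! t} = Suc t - 1"
      using cb[OF assms(2)] st len assms(2) by auto
  next
    fix x assume x: "x \<in> A \<and> card {y \<in> A. y < x} = Suc t - 1"
    then obtain i where i: "i < length xs" "x = xs!i" using st by (auto simp: in_set_conv_nth)
    then have "card {y \<in> A. y < x} = i" using cb len by simp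
    with x i show "x = xs!t" by simp
  qed
qed

lemma card_pairs:
  fixes A :: "'a::linorder set"
  assumes "finite A"
  shows "2 * card {(v,w). v\<in>A \<and> w\<in>A \<and> v<w} = card A * (card A - 1)"
proof -
  define P where "P = {(v,w). v\<in>A \<and> w\<in>A \<and> v<w}"
  define Q where "Q = {(v,w). v\<in>A \<and> w\<in>A \<and> w<v}"
  define D where "D = (\<lambda>x. (x,x)) ` A"
  have fP: "finite P" "finite Q" using assms
    by (auto simp: P_def Q_def intro: finite_subset[of _ "A \<times> A"])
  have "Q = prod.swap ` P" by (auto simp: P_def Q_def image_def)
  then have cQ: "card Q = card P" by (simp add: card_image)
  have PQ: "P \<union> Q = A \<times> A - D" by (auto simp: P_def Q_def D_def)
  have "card (P \<union> Q) = card P + card Q" using fP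
    by (intro card_Un_disjoint) (auto simp: P_def Q_def)
  moreover have "card (A \<times> A - D) = card A * card A - card A"
  proof -
    have "card D = card A" by (simp add: D_def card_image inj_on_def)
    moreover have "D \<subseteq> A \<times> A" by (auto simp: D_def)
    ultimately show ?thesis using assms by (simp add: card_Diff_subset finite_subset card_cartesian_product)
  qed
  ultimately show ?thesis using PQ cQ by (simp add: P_def[symmetric] diff_mult_distrib2)
qed


lemma ceil_div_cases:
  fixes n l :: nat
  assumes "l > 0"
  shows "(n + l - 1) div l = n div l \<or> (n + l - 1) div l = Suc (n div l)"
proof (cases "n mod l = 0")
  case True
  then obtain q where n: "n = l * q" by auto
  have "(l - 1 + q*l) div l = q" using div_mult_self1[of l "l-1" q] assms by simp
  moreover have "n + l - 1 = l - 1 + q*l" using n assms by (simp add: mult.commute)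
  ultimately show ?thesis using n assms by simp
next
  case False
  define q r where "q = n div l" "r = n mod l"
  have n: "n = l*q + r" and r: "r < l" "r > 0" using False assms by (auto simp: q_r_def)
  have "n + l - 1 = r - 1 + Suc q * l" using n r by (simp add: mult.commute)
  moreover have "(r - 1 + Suc q * l) div l = Suc q" using r div_mult_self1[of l "r-1" "Suc q"] by simp
  ultimately show ?thesis by (simp add: q_r_def)
qed

lemma count_formula:
  fixes Vs :: "nat \<Rightarrow> 'a::linorder set"
  assumes k: "k > 1" and fV: "finite V" and cV: "card V = n"
    and dec: "decomposition (k - 1) Vs V" and bal: "balanced n (k - 1) Vs"
  shows "real (card (SIGMA j:{1..k-1}. {(v,w). v\<in>Vs j \<and> w\<in>Vs j \<and> v<w})) =
     (real n - real (n mod (k - 1))) * (real n + real (n mod (k - 1)) - real k + 1) / (2 * real k - 2)"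
proof -
  define l where "l = k - 1"
  have l: "l > 0" using k by (simp add: l_def)
  define c where "c j = card (Vs j)" for j
  define q where "q = n div l"
  define r where "r = n mod l"
  have fin: "finite (Vs j)" if "j \<in> {1..l}" for j
    using dec fV that unfolding decomposition_def l_def
    by (metis (no_types, lifting) UN_upper finite_subset)
  have sumc: "(\<Sum>j\<in>{1..l}. c j) = n"
  proof -
    have "card (\<Union>j\<in>{1..l}. Vs j) = (\<Sum>j\<in>{1..l}. c j)"
      unfolding c_def using dec fin by (intro card_UN_disjoint) (auto simp: decomposition_def l_def)
    then show ?thesis using dec cV by (simp add: decomposition_def l_def)
  qed
  have cq: "c j = q \<or> c j = Suc q" if "j \<in> {1..l}" for j
    using bal that ceil_div_cases[OF l, of n] unfolding balanced_def c_def q_def l_def by auto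
  have cardD: "2 * card (SIGMA j:{1..l}. {(v,w). v\<in>Vs j \<and> w\<in>Vs j \<and> v<w}) = (\<Sum>j\<in>{1..l}. c j * (c j - 1))"
  proof -
    have fp: "finite {(v,w). v\<in>Vs j \<and> w\<in>Vs j \<and> v<w}" if "j \<in> {1..l}" for j
      using fin[OF that] by (auto intro: finite_subset[of _ "Vs j \<times> Vs j"])
    then have "card (SIGMA j:{1..l}. {(v,w). v\<in>Vs j \<and> w\<in>Vs j \<and> v<w}) =
       (\<Sum>j\<in>{1..l}. card {(v,w). v\<in>Vs j \<and> w\<in>Vs j \<and> v<w})" by simp
    also have "2 * \<dots> = (\<Sum>j\<in>{1..l}. c j * (c j - 1))"
      unfolding sum_distrib_left c_def by (rule sum.cong) (simp_all add: card_pairs fin)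
    finally show ?thesis by simp
  qed
  have each: "real (c j * (c j - 1)) = real q ^ 2 - real q + 2 * real q * (real (c j) - real q)"
    if "j \<in> {1..l}" for j
    using cq[OF that] by (auto simp: power2_eq_square algebra_simps)
  have "2 * real (card (SIGMA j:{1..l}. {(v,w). v\<in>Vs j \<and> w\<in>Vs j \<and> v<w}))
      = (\<Sum>j\<in>{1..l}. real q ^ 2 - real q + 2 * real q * (real (c j) - real q))"
    using arg_cong[OF cardD, of real] each by (simp add: of_nat_sum)
  also have "\<dots> = (\<Sum>j\<in>{1..l}. (real q ^ 2 - real q - 2 * real q * real q) + 2 * real q * real (c j))"
    by (rule sum.cong) (simp_all add: algebra_simps)
  also have "\<dots> = real l * (real q ^ 2 - real q - 2 * real q * real q) + 2 * real q * (\<Sum>j\<in>{1..l}. real (c j))"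
    by (simp add: sum.distrib sum_distrib_left[symmetric])
  also have "\<dots> = real l * (real q ^ 2 - real q) + 2 * real q * (real n - real l * real q)"
    using arg_cong[OF sumc, of real] by (simp add: of_nat_sum algebra_simps)
  finally have h: "2 * real (card (SIGMA j:{1..l}. {(v,w). v\<in>Vs j \<and> w\<in>Vs j \<and> v<w}))
      = real l * (real q ^ 2 - real q) + 2 * real q * (real n - real l * real q)" .
  have "n = l * q + r" unfolding q_def r_def by simp
  then have nq: "real n = real l * real q + real r" by (metis of_nat_add of_nat_mult)
  have kl: "real k = real l + 1" using k by (simp add: l_def)
  have cd: "real (card (SIGMA j:{1..l}. {(v,w). v\<in>Vs j \<and> w\<in>Vs j \<and> v<w}))
      = (real l * (real q * real q - real q) + 2 * real q * real r) / 2"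
    using h unfolding nq by (simp add: power2_eq_square)
  have lr: "real l > 0" using l by simp
  have "(real l * real q + real r - real r) * (real l * real q + real r + real r - (real l + 1) + 1) / (2 * (real l + 1) - 2)
     = (real l * (real q * real q - real q) + 2 * real q * real r) / 2"
    using lr by (simp add: field_simps)
  then show ?thesis
    unfolding l_def[symmetric] r_def[symmetric] cd nq kl by simp
qed


theorem mainTheorem4:
  fixes \<P> :: "'a::linorder set set" and k n :: nat and V :: "'a set" and Vs :: "nat \<Rightarrow> 'a set"
  assumes "k > 1"
    and "k_pattern k \<P>"
    and "at_most_one_reconstruction k \<P>"
    and "n > 0"
    and "finite V" and "card V = n"
    and "decomposition (k - 1) Vs V"
    and "orderly (k - 1) Vs"
    and "balanced n (k - 1) Vs"
  shows "real (count_instances \<P> V) =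
           (real n - real (n mod (k - 1))) * (real n + real (n mod (k - 1)) - real k + 1)
             / (2 * real k - 2)
    \<longleftrightarrow> (\<forall>j\<in>{1..k-1}. \<forall>v\<in>Vs j. \<forall>w\<in>Vs j. v < w \<longrightarrow>
           (\<exists>P. is_reconstruction \<P> j v w P \<and> P \<subseteq> V \<and>
                (\<forall>i\<in>{1..k-1}. i \<noteq> j \<longrightarrow> \<not> of_echelon Vs i P)))"
proof -
  note k = assms(1) and kp = assms(2) and amo = assms(3) and fV = assms(5) and cV = assms(6)
    and dec = assms(7) and ord = assms(8) and bal = assms(9)
  define l where "l = k - 1"
  have l: "l > 0" "k = Suc l" using k by (auto simp: l_def)
  have disj: "\<And>i i'. i \<in> {1..l} \<Longrightarrow> i' \<in> {1..l} \<Longrightarrow> i \<noteq> i' \<Longrightarrow> Vs i \<inter> Vs i' = {}"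
    and UV: "(\<Union>i\<in>{1..l}. Vs i) = V" using dec by (auto simp: decomposition_def l_def)
  have ordl: "\<And>i i' x y. i \<in> {1..l} \<Longrightarrow> i' \<in> {1..l} \<Longrightarrow> i < i' \<Longrightarrow> x \<in> Vs i \<Longrightarrow> y \<in> Vs i' \<Longrightarrow> x < y"
  proof -
    fix i i' x y assume "i \<in> {1..l}" "i' \<in> {1..l}" "i < i'" "x \<in> Vs i" "y \<in> Vs i'"
    then show "x < y" using ord unfolding orderly_def set_less_def l_def by blast
  qed
  define b where "b x = (THE i. i \<in> {1..l} \<and> x \<in> Vs i)" for x
  have bu: "b x = i" if "i \<in> {1..l}" "x \<in> Vs i" for x i
    unfolding b_def using that disj by (intro the_equality) blast+
  have bV: "b x \<in> {1..l} \<and> x \<in> Vs (b x)" if xV: "x \<in> V" for x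
  proof -
    obtain i where "i \<in> {1..l}" "x \<in> Vs i" using xV UV by blast
    then show ?thesis using bu by simp
  qed
  have bmono: "b x \<le> b y" if "x \<in> V" "y \<in> V" "x < y" for x y
  proof (rule ccontr)
    assume "\<not> b x \<le> b y"
    then have "y < x" using ordl[of "b y" "b x" y x] bV that by auto
    with that show False by simp
  qed
  have finP: "finite P" "card P = k" if "P \<in> \<P>" for P
    using kp that by (auto simp: k_pattern_def)
  have ptmem: "ith_point P (Suc t) \<in> P" if "P \<in> \<P>" "t < k" for P t
    using ith_point_sorted[of P t] finP[OF that(1)] that
    by (metis length_sorted_list_of_set nth_mem set_sorted_list_of_set)
  have ptlt: "ith_point P (Suc t) < ith_point P (Suc (Suc t))" if "P \<in> \<P>" "Suc t < k" for P t
  proof -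
    have "sorted_wrt (<) (sorted_list_of_set P)" by simp
    then show ?thesis
      using ith_point_sorted[of P t] ith_point_sorted[of P "Suc t"] finP[OF that(1)] that
        sorted_wrt_nth_less[of "(<)" "sorted_list_of_set P" t "Suc t"] by simp
  qed
  have echex: "\<exists>j\<in>{1..l}. of_echelon Vs j P" if P: "P \<in> \<P>" "P \<subseteq> V" for P
  proof -
    define c where "c t = b (ith_point P (Suc t))" for t
    have cV: "c t \<in> {1..l}" if "t < k" for t
      using bV ptmem[OF P(1) that] P(2) unfolding c_def by blast
    have cm: "c t \<le> c (Suc t)" if "Suc t < k" for t
      unfolding c_def using bmono ptmem[OF P(1)] ptlt[OF P(1) that] P(2) that
      by (meson Suc_lessD subsetD)
    define t0 where "t0 = (LEAST t. c (Suc t) \<le> Suc t)"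
    have ex: "c (Suc (l - 1)) \<le> Suc (l - 1)" using cV[of l] l by auto
    have t0a: "c (Suc t0) \<le> Suc t0" unfolding t0_def by (rule LeastI[where P="\<lambda>t. c (Suc t) \<le> Suc t", OF ex])
    have t0b: "t0 \<le> l - 1" unfolding t0_def by (rule Least_le[where P="\<lambda>t. c (Suc t) \<le> Suc t", OF ex])
    have t0k: "Suc t0 < k" using t0b l by simp
    have low: "c t0 \<ge> Suc t0"
    proof (cases t0)
      case 0 then show ?thesis using cV[of 0] l by auto
    next
      case (Suc s)
      have "\<not> c (Suc s) \<le> Suc s" using not_less_Least[of s "\<lambda>t. c (Suc t) \<le> Suc t"] Suc
        unfolding t0_def by simp
      then show ?thesis using Suc by simp
    qed
    have e1: "c t0 = Suc t0" and e2: "c (Suc t0) = Suc t0" using low t0a cm[OF t0k] by auto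
    have "ith_point P (Suc t0) \<in> Vs (Suc t0)"
      using bV[of "ith_point P (Suc t0)"] ptmem[OF P(1), of t0] P(2) t0k e1 unfolding c_def by auto
    moreover have "ith_point P (Suc (Suc t0)) \<in> Vs (Suc t0)"
      using bV[of "ith_point P (Suc (Suc t0))"] ptmem[OF P(1), of "Suc t0"] P(2) t0k e2 unfolding c_def by auto
    moreover have "Suc t0 \<in> {1..l}" using t0b l by auto
    ultimately show ?thesis unfolding of_echelon_def by blast
  qed
  have ptlt': "ith_point P j < ith_point P (Suc j)" if "P \<in> \<P>" "j \<in> {1..l}" for P j
    using ptlt[OF that(1), of "j - 1"] that l by auto
  have uniq: "P = Q" if "j \<in> {1..l}" "u < v" "is_reconstruction \<P> j u v P" "is_reconstruction \<P> j u v Q" for j u v P Q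
    using amo that unfolding at_most_one_reconstruction_def l_def by blast
  define D where "D = (SIGMA j:{1..k-1}. {(v,w). v\<in>Vs j \<and> w\<in>Vs j \<and> v<w})"
  define I where "I = {P. P \<subseteq> V \<and> P \<in> \<P>}"
  have cnt: "count_instances \<P> V = card I" by (simp add: count_instances_def I_def)
  have memD: "(j, v, w) \<in> D \<longleftrightarrow> j \<in> {1..l} \<and> v \<in> Vs j \<and> w \<in> Vs j \<and> v < w" for j v w
    by (simp add: D_def l_def)
  have finD: "finite D"
  proof -
    have "D \<subseteq> {1..l} \<times> V \<times> V" using UV by (auto simp: D_def l_def)
    then show ?thesis using fV by (metis finite_SigmaI finite_atLeastAtMost finite_subset)
  qed
  have "I \<subseteq> Pow V" by (auto simp: I_def)
  then have finI: "finite I" using fV by (meson finite_Pow_iff finite_subset)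
  define ech where "ech P = (LEAST j. j \<in> {1..l} \<and> of_echelon Vs j P)" for P
  have ech: "ech P \<in> {1..l} \<and> of_echelon Vs (ech P) P" if "P \<in> I" for P
  proof -
    have "\<exists>j. j \<in> {1..l} \<and> of_echelon Vs j P" using echex[of P] that unfolding I_def by blast
    then show ?thesis unfolding ech_def by (rule LeastI_ex)
  qed
  define phi where "phi P = (ech P, ith_point P (ech P), ith_point P (Suc (ech P)))" for P
  have phiD: "phi P \<in> D" if "P \<in> I" for P
    using ech[OF that] ptlt'[of P "ech P"] that unfolding phi_def memD of_echelon_def I_def by auto
  have rec: "is_reconstruction \<P> j (ith_point P j) (ith_point P (Suc j)) P" if "P \<in> \<P>" for P j
    using that by (simp add: is_reconstruction_def)
  have inj: "inj_on phi I"
  proof (rule inj_onI)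
    fix P Q assume PQ: "P \<in> I" "Q \<in> I" "phi P = phi Q"
    then have e: "ech P = ech Q" "ith_point P (ech P) = ith_point Q (ech Q)"
      "ith_point P (Suc (ech P)) = ith_point Q (Suc (ech Q))" by (auto simp: phi_def)
    show "P = Q"
      using uniq[of "ech P" "ith_point P (ech P)" "ith_point P (Suc (ech P))" P Q]
        rec[of P "ech P"] rec[of Q "ech Q"] e ech[OF PQ(1)] ptlt'[of P "ech P"] PQ
      by (auto simp: I_def)
  qed
  have le: "card I \<le> card D"
    using card_inj_on_le[OF inj _ finD] phiD by blast
  have formula: "real (card D) = (real n - real (n mod (k - 1))) * (real n + real (n mod (k - 1)) - real k + 1)
             / (2 * real k - 2)"
    unfolding D_def by (rule count_formula[OF k fV cV dec bal])
  have iff: "card I = card D \<longleftrightarrow> (\<forall>j\<in>{1..l}. \<forall>v\<in>Vs j. \<forall>w\<in>Vs j. v < w \<longrightarrow>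
           (\<exists>P. is_reconstruction \<P> j v w P \<and> P \<subseteq> V \<and>
                (\<forall>i\<in>{1..l}. i \<noteq> j \<longrightarrow> \<not> of_echelon Vs i P)))"
  proof
    assume eq: "card I = card D"
    have surj: "phi ` I = D"
      using card_image[OF inj] eq phiD finD by (intro card_subset_eq) auto
    show "\<forall>j\<in>{1..l}. \<forall>v\<in>Vs j. \<forall>w\<in>Vs j. v < w \<longrightarrow>
           (\<exists>P. is_reconstruction \<P> j v w P \<and> P \<subseteq> V \<and>
                (\<forall>i\<in>{1..l}. i \<noteq> j \<longrightarrow> \<not> of_echelon Vs i P))"
    proof (intro ballI impI)
      fix j v w assume jvw: "j \<in> {1..l}" "v \<in> Vs j" "w \<in> Vs j" "v < w"
      then have "(j, v, w) \<in> phi ` I" using surj memD by auto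
      then obtain P where P: "P \<in> I" "phi P = (j, v, w)" by auto
      then have ej: "ech P = j" "ith_point P j = v" "ith_point P (Suc j) = w" by (auto simp: phi_def)
      have "\<not> of_echelon Vs i P" if i: "i \<in> {1..l}" "i \<noteq> j" for i
      proof
        assume oe: "of_echelon Vs i P"
        have "(i, ith_point P i, ith_point P (Suc i)) \<in> D"
          using oe ptlt'[of P i] P(1) i unfolding memD of_echelon_def I_def by auto
        then obtain Q where Q: "Q \<in> I" "phi Q = (i, ith_point P i, ith_point P (Suc i))"
          using surj by (metis imageE)
        then have eq: "ech Q = i" "ith_point Q i = ith_point P i" "ith_point Q (Suc i) = ith_point P (Suc i)"
          by (auto simp: phi_def)
        have "Q = P"
          using uniq[of i "ith_point P i" "ith_point P (Suc i)" Q P] rec[of Q i] rec[of P i]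
            eq ptlt'[of P i] P(1) Q(1) i by (auto simp: I_def)
        then show False using eq ej i by simp
      qed
      then show "\<exists>P. is_reconstruction \<P> j v w P \<and> P \<subseteq> V \<and>
                (\<forall>i\<in>{1..l}. i \<noteq> j \<longrightarrow> \<not> of_echelon Vs i P)"
        using rec[of P j] ej P(1) by (intro exI[of _ P]) (auto simp: I_def)
    qed
  next
    assume H: "\<forall>j\<in>{1..l}. \<forall>v\<in>Vs j. \<forall>w\<in>Vs j. v < w \<longrightarrow>
           (\<exists>P. is_reconstruction \<P> j v w P \<and> P \<subseteq> V \<and>
                (\<forall>i\<in>{1..l}. i \<noteq> j \<longrightarrow> \<not> of_echelon Vs i P))"
    define psi where "psi x = (case x of (j, v, w) \<Rightarrow> SOME P. is_reconstruction \<P> j v w P \<and> P \<subseteq> V \<and>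
                (\<forall>i\<in>{1..l}. i \<noteq> j \<longrightarrow> \<not> of_echelon Vs i P))" for x
    have psi: "is_reconstruction \<P> j v w (psi (j,v,w)) \<and> psi (j,v,w) \<subseteq> V \<and>
                (\<forall>i\<in>{1..l}. i \<noteq> j \<longrightarrow> \<not> of_echelon Vs i (psi (j,v,w)))" if "(j,v,w) \<in> D" for j v w
    proof -
      have m: "j \<in> {1..l}" "v \<in> Vs j" "w \<in> Vs j" "v < w" using that memD by simp_all
      have "\<exists>P. is_reconstruction \<P> j v w P \<and> P \<subseteq> V \<and>
                (\<forall>i\<in>{1..l}. i \<noteq> j \<longrightarrow> \<not> of_echelon Vs i P)"
        using H m by blast
      then show ?thesis unfolding psi_def prod.case by (rule someI_ex)
    qed
    have psiI: "psi x \<in> I" if xD: "x \<in> D" for x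
    proof -
      obtain j v w where x: "x = (j,v,w)" by (cases x) auto
      show ?thesis using psi[of j v w] xD unfolding x I_def is_reconstruction_def by simp
    qed
    have "inj_on psi D"
    proof (rule inj_onI)
      fix x y assume xy: "x \<in> D" "y \<in> D" "psi x = psi y"
      obtain j v w where x: "x = (j,v,w)" by (cases x) auto
      obtain j' v' w' where y: "y = (j',v',w')" by (cases y) auto
      have px: "is_reconstruction \<P> j v w (psi x)" "\<forall>i\<in>{1..l}. i \<noteq> j \<longrightarrow> \<not> of_echelon Vs i (psi x)"
        using psi[of j v w] xy x by auto
      have py: "is_reconstruction \<P> j' v' w' (psi x)" "\<forall>i\<in>{1..l}. i \<noteq> j' \<longrightarrow> \<not> of_echelon Vs i (psi x)"
        using psi[of j' v' w'] xy y by auto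
      have "of_echelon Vs j' (psi x)" using py(1) xy(2) y memD
        by (auto simp: is_reconstruction_def of_echelon_def)
      moreover have "j' \<in> {1..l}" using xy(2) y memD by simp
      ultimately have "j = j'" using px(2) by (metis (no_types, lifting))
      then show "x = y" using px(1) py(1) x y by (auto simp: is_reconstruction_def)
    qed
    then have "card D \<le> card I" using card_inj_on_le[of psi D I] psiI finI by blast
    then show "card I = card D" using le by simp
  qed
  have e: "(real (count_instances \<P> V) =
           (real n - real (n mod (k - 1))) * (real n + real (n mod (k - 1)) - real k + 1)
             / (2 * real k - 2)) \<longleftrightarrow> card I = card D"
    unfolding cnt formula[symmetric] of_nat_eq_iff ..
  show ?thesis unfolding e using iff unfolding l_def .
qed

end
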